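(* Let $D\subset\mathbb{C}^N$ be a transitive domain. Let $\mathcal{A}(D)\subset C^2(D)$ be a set of functions such that $u\circ\phi\in\mathcal{A}(D)$ for every $\phi\in\operatorname{Aut}(D)$ and every $u\in\mathcal{A}(D)$. If there is a point $z_0\in D$ such that $$\frac{\partial^2u}{\partial z_j\partial\bar z_k}(z_0)=0\quad\text{for all }1\le j,k\le N\text{ and all }u\in\mathcal{A}(D),$$ then every element of $\mathcal{A}(D)$ is pluriharmonic on $D$.
   Context: $\operatorname{Aut}(D)$ is the group of biholomorphic self-maps of $D$. $D$ is transitive (homogeneous) if for any $z,w\in D$ there is $\phi\in\operatorname{Aut}(D)$ with $\phi(z)=w$. A function is pluriharmonic if all $\partial^2u/\partial z_j\partial\bar z_k$ vanish identically. *)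

theory Defs
  imports "HOL-Analysis.Analysis"
begin

text \<open>Points of C^N are modelled as complex ^ 'n (N = CARD('n)).
  Real first and second directional (Frechet) derivatives.\<close>

definition D1 :: "(complex ^ 'n \<Rightarrow> complex) \<Rightarrow> complex ^ 'n \<Rightarrow> complex ^ 'n \<Rightarrow> complex" where
  "D1 u w x = frechet_derivative u (at x) w"

definition D2 :: "(complex ^ 'n \<Rightarrow> complex) \<Rightarrow> complex ^ 'n \<Rightarrow> complex ^ 'n \<Rightarrow> complex ^ 'n \<Rightarrow> complex" where
  "D2 u v w x = frechet_derivative (\<lambda>y. D1 u w y) (at x) v"

definition C2_on :: "(complex ^ 'n) set \<Rightarrow> (complex ^ 'n \<Rightarrow> complex) \<Rightarrow> bool" where
  "C2_on D u \<longleftrightarrow> (\<forall>x\<in>D. u differentiable (at x)) \<and>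
     (\<forall>w. \<forall>x\<in>D. (\<lambda>y. D1 u w y) differentiable (at x)) \<and>
     (\<forall>v w. continuous_on D (D2 u v w))"

text \<open>Mixed Wirtinger derivative d^2 u / dz_j d(conj z_k), with
  d/dz_j = (d/dx_j - i d/dy_j)/2 and d/d(conj z_k) = (d/dx_k + i d/dy_k)/2.\<close>
definition wirtinger2 :: "(complex ^ 'n \<Rightarrow> complex) \<Rightarrow> 'n \<Rightarrow> 'n \<Rightarrow> complex ^ 'n \<Rightarrow> complex" where
  "wirtinger2 u j k x =
     (D2 u (axis j 1) (axis k 1) x + D2 u (axis j \<i>) (axis k \<i>) x
      + \<i> * (D2 u (axis j 1) (axis k \<i>) x - D2 u (axis j \<i>) (axis k 1) x)) / 4"

definition pluriharmonic_on :: "(complex ^ 'n) set \<Rightarrow> (complex ^ 'n \<Rightarrow> complex) \<Rightarrow> bool" where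
  "pluriharmonic_on D u \<longleftrightarrow> (\<forall>x\<in>D. \<forall>j k. wirtinger2 u j k x = 0)"

definition holo_map_on :: "(complex ^ 'n) set \<Rightarrow> (complex ^ 'n \<Rightarrow> complex ^ 'n) \<Rightarrow> bool" where
  "holo_map_on D F \<longleftrightarrow> (\<forall>x\<in>D. \<exists>L. (F has_derivative L) (at x) \<and>
       (\<forall>c v. L (c *s v) = c *s L v))"

definition Aut :: "(complex ^ 'n) set \<Rightarrow> (complex ^ 'n \<Rightarrow> complex ^ 'n) set" where
  "Aut D = {\<phi>. bij_betw \<phi> D D \<and> holo_map_on D \<phi> \<and> holo_map_on D (inv_into D \<phi>)}"

definition domain :: "(complex ^ 'n) set \<Rightarrow> bool" where
  "domain D \<longleftrightarrow> open D \<and> connected D \<and> D \<noteq> {}"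

definition transitive_domain :: "(complex ^ 'n) set \<Rightarrow> bool" where
  "transitive_domain D \<longleftrightarrow> domain D \<and> (\<forall>z\<in>D. \<forall>w\<in>D. \<exists>\<phi>\<in>Aut D. \<phi> z = w)"

end

theory Submission
  imports Defs "HOL-Complex_Analysis.Complex_Analysis"
begin

lemma D1_has: "u differentiable (at y) \<Longrightarrow> (u has_derivative (\<lambda>w. D1 u w y)) (at y)"
  unfolding D1_def by (simp add: frechet_derivative_works[symmetric])

lemma D2_has: "(\<lambda>y. D1 u w y) differentiable (at x) \<Longrightarrow>
   ((\<lambda>y. D1 u w y) has_derivative (\<lambda>v. D2 u v w x)) (at x)"
  unfolding D2_def by (simp add: frechet_derivative_works[symmetric])

lemma D1_linear: "u differentiable (at y) \<Longrightarrow> linear (\<lambda>w. D1 u w y)"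
  using D1_has has_derivative_linear by blast

lemma D2_linear: "(\<lambda>y. D1 u w y) differentiable (at x) \<Longrightarrow> linear (\<lambda>v. D2 u v w x)"
  using D2_has has_derivative_linear by blast

lemma lin_repr:
  fixes f :: "'a::euclidean_space \<Rightarrow> 'b::real_vector"
  assumes "linear f" shows "f w = (\<Sum>e\<in>Basis. (w \<bullet> e) *\<^sub>R f e)"
proof -
  have "f w = f (\<Sum>e\<in>Basis. (w \<bullet> e) *\<^sub>R e)" by (simp add: euclidean_representation)
  also have "\<dots> = (\<Sum>e\<in>Basis. (w \<bullet> e) *\<^sub>R f e)"
    using assms by (simp add: linear_sum linear_cmul)
  finally show ?thesis .
qed

lemma D1_repr: "u differentiable (at y) \<Longrightarrow> D1 u w y = (\<Sum>e\<in>Basis. (w \<bullet> e) *\<^sub>R D1 u e y)"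
  using lin_repr[OF D1_linear] by blast

lemma D2_repr:
  assumes "open D" "x \<in> D" "\<forall>y\<in>D. u differentiable (at y)"
    "\<forall>e. (\<lambda>y. D1 u e y) differentiable (at x)"
  shows "D2 u v w x = (\<Sum>e\<in>Basis. (w \<bullet> e) *\<^sub>R D2 u v e x)"
proof -
  have h1: "((\<lambda>y. \<Sum>e\<in>Basis. (w \<bullet> e) *\<^sub>R D1 u e y) has_derivative
      (\<lambda>v. \<Sum>e\<in>Basis. (w \<bullet> e) *\<^sub>R D2 u v e x)) (at x)"
    by (intro has_derivative_sum has_derivative_scaleR_right D2_has assms(4)[rule_format])
  have h2: "((\<lambda>y. D1 u w y) has_derivative
      (\<lambda>v. \<Sum>e\<in>Basis. (w \<bullet> e) *\<^sub>R D2 u v e x)) (at x)"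
    by (rule has_derivative_transform_within_open[OF h1 assms(1,2)]) (use assms(3) in \<open>simp add: D1_repr[of u _ w]\<close>)
  have h3: "((\<lambda>y. D1 u w y) has_derivative (\<lambda>v. D2 u v w x)) (at x)"
    by (rule D2_has) (rule differentiableI[OF h2])
  from has_derivative_unique[OF h3 h2] show ?thesis by (rule fun_cong)
qed

lemma line_deriv:
  assumes "u differentiable (at (a + \<sigma> *\<^sub>R v))"
  shows "((\<lambda>\<sigma>. u (a + \<sigma> *\<^sub>R v)) has_derivative (\<lambda>h. h *\<^sub>R D1 u v (a + \<sigma> *\<^sub>R v))) (at \<sigma> within S)"
proof -
  have l: "((\<lambda>\<sigma>. a + \<sigma> *\<^sub>R v) has_derivative (\<lambda>h. h *\<^sub>R v)) (at \<sigma>)"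
    by (auto intro!: derivative_eq_intros)
  have "((\<lambda>\<sigma>. u (a + \<sigma> *\<^sub>R v)) has_derivative (\<lambda>h. D1 u (h *\<^sub>R v) (a + \<sigma> *\<^sub>R v))) (at \<sigma>)"
    using has_derivative_compose[OF l D1_has[OF assms]] by (simp add: o_def)
  moreover have "(\<lambda>h. D1 u (h *\<^sub>R v) (a + \<sigma> *\<^sub>R v)) = (\<lambda>h. h *\<^sub>R D1 u v (a + \<sigma> *\<^sub>R v))"
    using linear_cmul[OF D1_linear[OF assms]] by auto
  ultimately show ?thesis using has_derivative_at_withinI by metis
qed

lemma D1_D1: "D1 (D1 f v) w y = D2 f w v y"
  unfolding D1_def D2_def by simp

lemma onorm_scal: "onorm (\<lambda>h::real. h *\<^sub>R (c::'a::real_normed_vector)) = norm c"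
  using onorm_scaleR_left[OF bounded_linear_ident, of c] by (simp add: onorm_id)

lemma C2_onD:
  assumes "C2_on D u"
  shows "\<And>x. x\<in>D \<Longrightarrow> u differentiable (at x)"
    "\<And>w x. x\<in>D \<Longrightarrow> (\<lambda>y. D1 u w y) differentiable (at x)"
    "\<And>v w. continuous_on D (D2 u v w)"
  using assms unfolding C2_on_def by auto

lemma delta_bound:
  fixes f :: "complex^'n \<Rightarrow> complex"
  assumes D: "open D" "p \<in> D" and C2: "C2_on D f" and e: "e > 0"
  shows "\<exists>d>0. \<forall>s t. \<bar>s\<bar> < d \<longrightarrow> \<bar>t\<bar> < d \<longrightarrow>
     norm (f (p + t *\<^sub>R w + s *\<^sub>R v) - f (p + s *\<^sub>R v) - f (p + t *\<^sub>R w) + f p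
        - (s*t) *\<^sub>R D2 f w v p) \<le> e * \<bar>s\<bar> * \<bar>t\<bar>"
proof -
  define A where "A = D2 f w v p"
  obtain r0 where r0: "r0 > 0" "ball p r0 \<subseteq> D" using D openE by blast
  have "continuous_on D (D2 f w v)" using C2_onD(3)[OF C2] .
  then obtain r1 where r1: "r1 > 0" "\<forall>y\<in>D. dist y p < r1 \<longrightarrow> dist (D2 f w v y) A < e"
    unfolding continuous_on_iff A_def using D(2) e by blast
  define r where "r = min r0 r1"
  define d where "d = r / (norm v + norm w + 1)"
  have rpos: "r > 0" using r0 r1 r_def by auto
  have dpos: "d > 0" unfolding d_def using rpos by (intro divide_pos_pos) (auto intro: add_nonneg_pos)
  have inball: "dist (p + \<tau> *\<^sub>R w + \<sigma> *\<^sub>R v) p < r" if "\<bar>\<sigma>\<bar> < d" "\<bar>\<tau>\<bar> < d" for \<sigma> \<tau>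
  proof -
    have "dist (p + \<tau> *\<^sub>R w + \<sigma> *\<^sub>R v) p = norm (\<tau> *\<^sub>R w + \<sigma> *\<^sub>R v)"
      by (simp add: dist_norm)
    also have "\<dots> \<le> \<bar>\<tau>\<bar> * norm w + \<bar>\<sigma>\<bar> * norm v"
      using norm_triangle_ineq[of "\<tau> *\<^sub>R w" "\<sigma> *\<^sub>R v"] by simp
    also have "\<dots> \<le> d * norm w + d * norm v"
      using that by (intro add_mono mult_right_mono) auto
    also have "\<dots> < d * (norm v + norm w + 1)" using dpos by (simp add: algebra_simps)
    also have "\<dots> = r"
    proof -
      have "norm v + norm w + 1 > 0" by (auto intro: add_nonneg_pos)
      then show ?thesis unfolding d_def by simp
    qed
    finally show ?thesis .
  qed
  have inD: "p + \<tau> *\<^sub>R w + \<sigma> *\<^sub>R v \<in> D" if "\<bar>\<sigma>\<bar> < d" "\<bar>\<tau>\<bar> < d" for \<sigma> \<tau>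
    using inball[OF that] r0 r_def by (auto simp: dist_commute subset_iff)
  have closeA: "norm (D2 f w v (p + \<tau> *\<^sub>R w + \<sigma> *\<^sub>R v) - A) < e" if "\<bar>\<sigma>\<bar> < d" "\<bar>\<tau>\<bar> < d" for \<sigma> \<tau>
    using r1(2) inD[OF that] inball[OF that] r_def by (auto simp: dist_norm)
  have seg: "\<bar>x\<bar> < d" if "x \<in> closed_segment 0 s" "\<bar>s\<bar> < d" for x s :: real
    using that by (auto simp: closed_segment_eq_real_ivl split: if_splits)
  show ?thesis
  proof (intro exI[of _ d] conjI allI impI dpos)
    fix s t :: real assume s: "\<bar>s\<bar> < d" and t: "\<bar>t\<bar> < d"
    have chi: "norm (D1 f v (p + t *\<^sub>R w + \<sigma> *\<^sub>R v) - D1 f v (p + \<sigma> *\<^sub>R v) - t *\<^sub>R A) \<le> e * \<bar>t\<bar>"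
      if \<sigma>: "\<bar>\<sigma>\<bar> < d" for \<sigma>
    proof -
      define gg where "gg = (\<lambda>\<tau>. D1 f v (p + \<sigma> *\<^sub>R v + \<tau> *\<^sub>R w) - \<tau> *\<^sub>R A)"
      have "norm (gg t - gg 0) \<le> e * norm (t - 0)"
      proof (rule differentiable_bound[of "closed_segment 0 t" gg
            "\<lambda>\<tau> h. h *\<^sub>R (D2 f w v (p + \<sigma> *\<^sub>R v + \<tau> *\<^sub>R w) - A)"])
        fix \<tau> assume \<tau>: "\<tau> \<in> closed_segment 0 t"
        have tt: "\<bar>\<tau>\<bar> < d" using seg[OF \<tau> t] .
        have pe: "p + \<sigma> *\<^sub>R v + \<tau> *\<^sub>R w = p + \<tau> *\<^sub>R w + \<sigma> *\<^sub>R v" by (simp add: algebra_simps)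
        have dd: "(\<lambda>y. D1 f v y) differentiable (at (p + \<sigma> *\<^sub>R v + \<tau> *\<^sub>R w))"
          using C2_onD(2)[OF C2 inD[OF \<sigma> tt]] unfolding pe by simp
        have "((\<lambda>\<tau>. D1 f v (p + \<sigma> *\<^sub>R v + \<tau> *\<^sub>R w)) has_derivative
            (\<lambda>h. h *\<^sub>R D2 f w v (p + \<sigma> *\<^sub>R v + \<tau> *\<^sub>R w))) (at \<tau> within closed_segment 0 t)"
          using line_deriv[of "D1 f v", OF dd] by (simp add: D1_D1)
        then show "(gg has_derivative (\<lambda>h. h *\<^sub>R (D2 f w v (p + \<sigma> *\<^sub>R v + \<tau> *\<^sub>R w) - A)))
            (at \<tau> within closed_segment 0 t)"
          unfolding gg_def by (auto intro!: derivative_eq_intros simp: algebra_simps)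
        show "onorm (\<lambda>h. h *\<^sub>R (D2 f w v (p + \<sigma> *\<^sub>R v + \<tau> *\<^sub>R w) - A)) \<le> e"
          using closeA[OF \<sigma> tt] unfolding pe by (simp add: onorm_scal)
      qed (auto simp: convex_closed_segment)
      moreover have "gg t - gg 0 = D1 f v (p + t *\<^sub>R w + \<sigma> *\<^sub>R v) - D1 f v (p + \<sigma> *\<^sub>R v) - t *\<^sub>R A"
        unfolding gg_def by (simp add: algebra_simps)
      ultimately show ?thesis by simp
    qed
    define qq where "qq = (\<lambda>\<sigma>. f (p + t *\<^sub>R w + \<sigma> *\<^sub>R v) - f (p + \<sigma> *\<^sub>R v) - (\<sigma> * t) *\<^sub>R A)"
    have "norm (qq s - qq 0) \<le> (e * \<bar>t\<bar>) * norm (s - 0)"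
    proof (rule differentiable_bound[of "closed_segment 0 s" qq
          "\<lambda>\<sigma> h. h *\<^sub>R (D1 f v (p + t *\<^sub>R w + \<sigma> *\<^sub>R v) - D1 f v (p + \<sigma> *\<^sub>R v) - t *\<^sub>R A)"])
      fix \<sigma> assume \<sigma>: "\<sigma> \<in> closed_segment 0 s"
      have ss: "\<bar>\<sigma>\<bar> < d" using seg[OF \<sigma> s] .
      have d1: "f differentiable (at (p + t *\<^sub>R w + \<sigma> *\<^sub>R v))"
        using C2_onD(1)[OF C2 inD[OF ss t]] .
      have d2: "f differentiable (at (p + \<sigma> *\<^sub>R v))"
        using C2_onD(1)[OF C2 inD[OF ss, of 0]] dpos by simp
      show "(qq has_derivative (\<lambda>h. h *\<^sub>R (D1 f v (p + t *\<^sub>R w + \<sigma> *\<^sub>R v) - D1 f v (p + \<sigma> *\<^sub>R v) - t *\<^sub>R A)))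
            (at \<sigma> within closed_segment 0 s)"
        unfolding qq_def
        using has_derivative_diff[OF has_derivative_diff[OF line_deriv[OF d1] line_deriv[OF d2]]
           has_derivative_scaleR_left[OF has_derivative_mult_left[OF has_derivative_ident, of t], of A]]
        by (simp add: scaleR_diff_right algebra_simps)
      show "onorm (\<lambda>h. h *\<^sub>R (D1 f v (p + t *\<^sub>R w + \<sigma> *\<^sub>R v) - D1 f v (p + \<sigma> *\<^sub>R v) - t *\<^sub>R A)) \<le> e * \<bar>t\<bar>"
        using chi[OF ss] by (simp add: onorm_scal)
    qed (auto simp: convex_closed_segment)
    moreover have "qq s - qq 0 = f (p + t *\<^sub>R w + s *\<^sub>R v) - f (p + s *\<^sub>R v) - f (p + t *\<^sub>R w) + f p
        - (s*t) *\<^sub>R A"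
      unfolding qq_def by (simp add: algebra_simps)
    ultimately show "norm (f (p + t *\<^sub>R w + s *\<^sub>R v) - f (p + s *\<^sub>R v) - f (p + t *\<^sub>R w) + f p
        - (s*t) *\<^sub>R D2 f w v p) \<le> e * \<bar>s\<bar> * \<bar>t\<bar>"
      unfolding A_def by (simp add: mult_ac)
  qed
qed

lemma D2_sym:
  fixes f :: "complex^'n \<Rightarrow> complex"
  assumes D: "open D" "p \<in> D" and C2: "C2_on D f"
  shows "D2 f w v p = D2 f v w p"
proof (rule ccontr)
  assume ne: "D2 f w v p \<noteq> D2 f v w p"
  define e where "e = norm (D2 f w v p - D2 f v w p) / 4"
  have e: "e > 0" using ne unfolding e_def by simp
  obtain d1 where d1: "d1 > 0" "\<forall>s t. \<bar>s\<bar> < d1 \<longrightarrow> \<bar>t\<bar> < d1 \<longrightarrow>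
     norm (f (p + t *\<^sub>R w + s *\<^sub>R v) - f (p + s *\<^sub>R v) - f (p + t *\<^sub>R w) + f p
        - (s*t) *\<^sub>R D2 f w v p) \<le> e * \<bar>s\<bar> * \<bar>t\<bar>"
    using delta_bound[OF D C2 e, of w v] by blast
  obtain d2 where d2: "d2 > 0" "\<forall>s t. \<bar>s\<bar> < d2 \<longrightarrow> \<bar>t\<bar> < d2 \<longrightarrow>
     norm (f (p + t *\<^sub>R v + s *\<^sub>R w) - f (p + s *\<^sub>R w) - f (p + t *\<^sub>R v) + f p
        - (s*t) *\<^sub>R D2 f v w p) \<le> e * \<bar>s\<bar> * \<bar>t\<bar>"
    using delta_bound[OF D C2 e, of v w] by blast
  define s where "s = min d1 d2 / 2"
  have s: "s > 0" "\<bar>s\<bar> < d1" "\<bar>s\<bar> < d2" using d1 d2 s_def by auto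
  define X where "X = f (p + s *\<^sub>R w + s *\<^sub>R v) - f (p + s *\<^sub>R v) - f (p + s *\<^sub>R w) + f p"
  have b1: "norm (X - (s * s) *\<^sub>R D2 f w v p) \<le> e * s * s"
    using d1(2)[rule_format, OF s(2) s(2)] s(1) unfolding X_def by simp
  have b2: "norm (X - (s * s) *\<^sub>R D2 f v w p) \<le> e * s * s"
  proof -
    have "X = f (p + s *\<^sub>R v + s *\<^sub>R w) - f (p + s *\<^sub>R w) - f (p + s *\<^sub>R v) + f p"
      unfolding X_def by (simp add: algebra_simps)
    then show ?thesis using d2(2)[rule_format, OF s(3) s(3)] s(1) by simp
  qed
  have "norm ((s * s) *\<^sub>R (D2 f w v p - D2 f v w p)) \<le>
      norm (X - (s * s) *\<^sub>R D2 f v w p) + norm (X - (s * s) *\<^sub>R D2 f w v p)"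
    using norm_triangle_ineq4[of "X - (s * s) *\<^sub>R D2 f v w p" "X - (s * s) *\<^sub>R D2 f w v p"]
    by (simp add: algebra_simps)
  also have "\<dots> \<le> (s * s) * (2*e)" using b1 b2 by (simp add: algebra_simps)
  finally have "(s * s) * norm (D2 f w v p - D2 f v w p) \<le> (s * s) * (2*e)"
    using s by simp
  then have "norm (D2 f w v p - D2 f v w p) \<le> 2*e" using s by simp
  then show False using e unfolding e_def by simp
qed

lemma vd_comp:
  assumes "u differentiable (at (c s))" "(c has_vector_derivative v) (at s)"
  shows "((\<lambda>s. u (c s)) has_vector_derivative D1 u v (c s)) (at s)"
proof -
  have "((\<lambda>s. u (c s)) has_derivative (\<lambda>h. D1 u (h *\<^sub>R v) (c s))) (at s)"
    using has_derivative_compose[OF assms(2)[unfolded has_vector_derivative_def] D1_has[OF assms(1)]]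
    by (simp add: o_def)
  moreover have "(\<lambda>h. D1 u (h *\<^sub>R v) (c s)) = (\<lambda>h. h *\<^sub>R D1 u v (c s))"
    using linear_cmul[OF D1_linear[OF assms(1)]] by auto
  ultimately show ?thesis unfolding has_vector_derivative_def by simp
qed

lemma curve2:
  fixes u :: "complex^'n \<Rightarrow> complex" and c :: "real \<Rightarrow> complex^'n"
  assumes D: "open D" and C2: "C2_on D u" and T: "open T" "0 \<in> T" "\<forall>s\<in>T. c s \<in> D"
    and c1: "\<forall>s\<in>T. (c has_vector_derivative c' s) (at s)"
    and c2: "(c' has_vector_derivative c2) (at 0)"
  shows "\<forall>s\<in>T. ((\<lambda>s. u (c s)) has_vector_derivative D1 u (c' s) (c s)) (at s)"
    and "((\<lambda>s. D1 u (c' s) (c s)) has_vector_derivative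
          (D1 u c2 (c 0) + D2 u (c' 0) (c' 0) (c 0))) (at 0)"
proof -
  show "\<forall>s\<in>T. ((\<lambda>s. u (c s)) has_vector_derivative D1 u (c' s) (c s)) (at s)"
    using vd_comp C2_onD(1)[OF C2] T c1 by blast
  have c0: "c 0 \<in> D" using T by auto
  have hs: "((\<lambda>s. \<Sum>e\<in>Basis. (c' s \<bullet> e) *\<^sub>R D1 u e (c s)) has_vector_derivative
      (\<Sum>e\<in>Basis. (c' 0 \<bullet> e) *\<^sub>R D2 u (c' 0) e (c 0) + (c2 \<bullet> e) *\<^sub>R D1 u e (c 0))) (at 0)"
  proof (rule has_vector_derivative_sum)
    fix e :: "complex^'n" assume "e \<in> Basis"
    have i1: "((\<lambda>s. c' s \<bullet> e) has_field_derivative (c2 \<bullet> e)) (at 0)"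
      using c2 unfolding has_real_derivative_iff_has_vector_derivative has_vector_derivative_def
      by (auto intro!: derivative_eq_intros)
    have i2: "((\<lambda>s. D1 u e (c s)) has_vector_derivative D2 u (c' 0) e (c 0)) (at 0)"
      using vd_comp[of "D1 u e" c 0 "c' 0"] C2_onD(2)[OF C2 c0, of e] c1 T
      by (simp add: D1_D1)
    show "((\<lambda>s. (c' s \<bullet> e) *\<^sub>R D1 u e (c s)) has_vector_derivative
        (c' 0 \<bullet> e) *\<^sub>R D2 u (c' 0) e (c 0) + (c2 \<bullet> e) *\<^sub>R D1 u e (c 0)) (at 0)"
      using has_vector_derivative_scaleR[OF i1 i2] by simp
  qed
  have eq: "(\<Sum>e\<in>Basis. (c' 0 \<bullet> e) *\<^sub>R D2 u (c' 0) e (c 0) + (c2 \<bullet> e) *\<^sub>R D1 u e (c 0))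
      = D1 u c2 (c 0) + D2 u (c' 0) (c' 0) (c 0)"
    using D2_repr[OF D c0, of u "c' 0" "c' 0"] D1_repr[of u "c 0" c2] C2_onD[OF C2] c0
    by (simp add: sum.distrib)
  show "((\<lambda>s. D1 u (c' s) (c s)) has_vector_derivative
          (D1 u c2 (c 0) + D2 u (c' 0) (c' 0) (c 0))) (at 0)"
  proof (rule has_vector_derivative_transform_within_open[OF hs[unfolded eq] T(1,2)])
    fix y assume "y \<in> T"
    then have "u differentiable (at (c y))" using C2_onD(1)[OF C2] T(3) by blast
    then show "(\<Sum>e\<in>Basis. (c' y \<bullet> e) *\<^sub>R D1 u e (c y)) = D1 u (c' y) (c y)"
      using D1_repr[of u "c y" "c' y"] by simp
  qed
qed

lemma second_along:
  fixes u :: "complex^'n \<Rightarrow> complex" and \<phi> :: "complex^'n \<Rightarrow> complex^'n"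
  assumes D: "open D" "z0 \<in> D" and Cu: "C2_on D u" and Cf: "C2_on D (u \<circ> \<phi>)"
    and \<phi>D: "\<forall>y\<in>D. \<phi> y \<in> D"
    and T: "open T" "0 \<in> T" "\<forall>s\<in>T. z0 + s *\<^sub>R \<beta> \<in> D"
    and c1: "\<forall>s\<in>T. (c has_vector_derivative c' s) (at s)"
    and c2: "(c' has_vector_derivative c2) (at 0)"
    and c: "\<forall>s. c s = \<phi> (z0 + s *\<^sub>R \<beta>)"
  shows "D2 (u \<circ> \<phi>) \<beta> \<beta> z0 = D1 u c2 (\<phi> z0) + D2 u (c' 0) (c' 0) (\<phi> z0)"
proof -
  define f where "f = u \<circ> \<phi>"
  have lf: "((\<lambda>s. z0 + s *\<^sub>R \<beta>) has_vector_derivative \<beta>) (at s)" for s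
    by (auto intro!: derivative_eq_intros)
  have l0: "((\<lambda>s::real. \<beta>) has_vector_derivative 0) (at 0)" by (auto intro!: derivative_eq_intros)
  note A = curve2[OF D(1) Cf[folded f_def] T(1,2), of "\<lambda>s. z0 + s *\<^sub>R \<beta>" "\<lambda>s. \<beta>" 0]
  have A1: "\<forall>s\<in>T. ((\<lambda>s. f (z0 + s *\<^sub>R \<beta>)) has_vector_derivative D1 f \<beta> (z0 + s *\<^sub>R \<beta>)) (at s)"
  proof -
    have pre: "\<forall>s\<in>T. ((\<lambda>s. z0 + s *\<^sub>R \<beta>) has_vector_derivative \<beta>) (at s)" using lf by simp
    show ?thesis using A(1)[OF T(3) pre l0] by simp
  qed
  have A2: "((\<lambda>s. D1 f \<beta> (z0 + s *\<^sub>R \<beta>)) has_vector_derivative (D1 f 0 z0 + D2 f \<beta> \<beta> z0)) (at 0)"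
  proof -
    have pre: "\<forall>s\<in>T. ((\<lambda>s. z0 + s *\<^sub>R \<beta>) has_vector_derivative \<beta>) (at s)" using lf by simp
    show ?thesis using A(2)[OF T(3) pre l0] by simp
  qed
  have cD: "\<forall>s\<in>T. c s \<in> D" using c \<phi>D T(3) by auto
  note B = curve2[OF D(1) Cu T(1,2) cD c1 c2]
  have fc: "(\<lambda>s. f (z0 + s *\<^sub>R \<beta>)) = (\<lambda>s. u (c s))" using c f_def by auto
  have eq1: "D1 f \<beta> (z0 + s *\<^sub>R \<beta>) = D1 u (c' s) (c s)" if "s \<in> T" for s
  proof -
    have "((\<lambda>s. f (z0 + s *\<^sub>R \<beta>)) has_vector_derivative D1 u (c' s) (c s)) (at s)"
      unfolding fc using B(1) that by blast
    then show ?thesis using vector_derivative_unique_at A1 that by blast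
  qed
  have A2': "((\<lambda>s. D1 u (c' s) (c s)) has_vector_derivative (D1 f 0 z0 + D2 f \<beta> \<beta> z0)) (at 0)"
    by (rule has_vector_derivative_transform_within_open[OF A2 T(1,2)]) (rule eq1)
  have "D1 f 0 z0 + D2 f \<beta> \<beta> z0 = D1 u c2 (c 0) + D2 u (c' 0) (c' 0) (c 0)"
    using vector_derivative_unique_at[OF A2' B(2)] .
  moreover have "D1 f 0 z0 = 0"
    using linear_0[OF D1_linear[OF C2_onD(1)[OF Cf[folded f_def] D(2)]]] .
  moreover have "c 0 = \<phi> z0" using c by simp
  ultimately show ?thesis unfolding f_def by simp
qed

lemma vec_vd:
  fixes f :: "real \<Rightarrow> 'n::finite \<Rightarrow> complex"
  assumes "\<And>m. ((\<lambda>s. f s m) has_vector_derivative d m) (at s)"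
  shows "((\<lambda>s. \<chi> m. f s m) has_vector_derivative (\<chi> m. d m)) (at s)"
  unfolding has_vector_derivative_def
proof (subst has_derivative_componentwise_within, intro ballI)
  fix e :: "complex^'n" assume "e \<in> Basis"
  then obtain i and c :: complex where e: "e = axis i c" by (auto simp: Basis_vec_def)
  have "((\<lambda>s. f s i \<bullet> c) has_derivative (\<lambda>h. (h *\<^sub>R d i) \<bullet> c)) (at s)"
    using bounded_linear.has_derivative[OF bounded_linear_inner_left assms[of i, unfolded has_vector_derivative_def]] .
  then show "((\<lambda>x. (\<chi> m. f x m) \<bullet> e) has_derivative (\<lambda>x. x *\<^sub>R (\<chi> m. d m) \<bullet> e)) (at s)"
    unfolding e by (simp add: inner_axis)
qed

lemma smul_decomp: "t *s (b::complex^'n) = Re t *\<^sub>R b + Im t *\<^sub>R (\<i> *s b)"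
proof -
  have "t * z = Re t *\<^sub>R z + Im t *\<^sub>R (\<i> * z)" for z
  proof -
    have e: "t = of_real (Re t) + \<i> * of_real (Im t)" by (rule complex_eq)
    have "t * z = (of_real (Re t) + \<i> * of_real (Im t)) * z" by (rule arg_cong[OF e])
    also have "\<dots> = Re t *\<^sub>R z + Im t *\<^sub>R (\<i> * z)" by (simp add: scaleR_conv_of_real algebra_simps)
    finally show ?thesis .
  qed
  then show ?thesis by (simp add: vec_eq_iff)
qed

lemma ofreal_smul: "(of_real s :: complex) *s (b::complex^'n) = s *\<^sub>R b"
proof (rule vec_eq_iff[THEN iffD2], rule allI)
  fix i
  have "(of_real s *s b)$i = of_real s * b$i" by (rule vector_smult_component)
  also have "\<dots> = s *\<^sub>R (b$i)" by (rule scaleR_conv_of_real[symmetric])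
  also have "\<dots> = (s *\<^sub>R b)$i" by (rule vector_scaleR_component[symmetric])
  finally show "(of_real s *s b)$i = (s *\<^sub>R b)$i" .
qed

lemma line_c: "((\<lambda>t. z0 + t *s (b::complex^'n)) has_derivative (\<lambda>h. h *s b)) (at t)"
proof -
  have "((\<lambda>t. z0 + (Re t *\<^sub>R b + Im t *\<^sub>R (\<i> *s b))) has_derivative
     (\<lambda>h. 0 + (Re h *\<^sub>R b + Im h *\<^sub>R (\<i> *s b)))) (at t)"
    by (intro has_derivative_add has_derivative_const has_derivative_scaleR_left
          has_derivative_Re has_derivative_Im has_derivative_ident)
  moreover have e1: "\<And>t. Re t *\<^sub>R b + Im t *\<^sub>R (\<i> *s b) = t *s b" by (rule smul_decomp[symmetric])
  ultimately show ?thesis by (simp only: e1 add_0_left)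
qed

lemma holo_deriv:
  assumes "holo_map_on D \<phi>" "y \<in> D"
  shows "(\<phi> has_derivative frechet_derivative \<phi> (at y)) (at y)"
    and "\<And>c v. frechet_derivative \<phi> (at y) (c *s v) = c *s frechet_derivative \<phi> (at y) v"
proof -
  obtain L where L: "(\<phi> has_derivative L) (at y)" "\<forall>c v. L (c *s v) = c *s L v"
    using assms unfolding holo_map_on_def by blast
  have "L = frechet_derivative \<phi> (at y)" using frechet_derivative_at[OF L(1)] .
  then show "(\<phi> has_derivative frechet_derivative \<phi> (at y)) (at y)"
    and "\<And>c v. frechet_derivative \<phi> (at y) (c *s v) = c *s frechet_derivative \<phi> (at y) v"
    using L by auto
qed

lemma chainQ:
  fixes u :: "complex^'n \<Rightarrow> complex" and \<phi> :: "complex^'n \<Rightarrow> complex^'n"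
  assumes D: "open D" "z0 \<in> D" and Cu: "C2_on D u" and Cf: "C2_on D (u \<circ> \<phi>)"
    and \<phi>D: "\<forall>y\<in>D. \<phi> y \<in> D" and H: "holo_map_on D \<phi>"
    and a: "a = frechet_derivative \<phi> (at z0) b"
  shows "D2 (u \<circ> \<phi>) b b z0 + D2 (u \<circ> \<phi>) (\<i> *s b) (\<i> *s b) z0
       = D2 u a a (\<phi> z0) + D2 u (\<i> *s a) (\<i> *s a) (\<phi> z0)"
proof -
  define Dp where "Dp y = frechet_derivative \<phi> (at y)" for y
  define S where "S = {t::complex. z0 + t *s b \<in> D}"
  have Sopen: "open S"
  proof -
    have "S = (\<lambda>t. z0 + t *s b) -` D" unfolding S_def by auto
    moreover have "continuous (at t) (\<lambda>t. z0 + t *s b)" for t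
      using has_derivative_continuous[OF line_c] .
    ultimately show ?thesis using continuous_open_vimage[OF D(1)] by metis
  qed
  have S0: "0 \<in> S" unfolding S_def using D(2) by simp
  define g where "g m t = \<phi> (z0 + t *s b) $ m" for m t
  have gd: "(g m has_field_derivative (Dp (z0 + t *s b) b $ m)) (at t)" if "t \<in> S" for m t
  proof -
    define y where "y = z0 + t *s b"
    have yD: "y \<in> D" using that unfolding S_def y_def by simp
    have "((\<lambda>t. \<phi> (z0 + t *s b)) has_derivative (\<lambda>h. Dp y (h *s b))) (at t)"
      using has_derivative_compose[OF line_c[of z0 b t] holo_deriv(1)[OF H yD, unfolded y_def]]
      unfolding y_def Dp_def by (simp add: o_def)
    then have "((\<lambda>t. \<phi> (z0 + t *s b) $ m) has_derivative (\<lambda>h. Dp y (h *s b) $ m)) (at t)"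
      by (rule bounded_linear.has_derivative[OF bounded_linear_vec_nth])
    moreover have "(\<lambda>h. Dp y (h *s b) $ m) = (*) (Dp y b $ m)"
      using holo_deriv(2)[OF H yD] unfolding Dp_def by (auto simp: mult.commute)
    ultimately show ?thesis unfolding has_field_derivative_def g_def y_def by simp
  qed
  have ghol: "g m holomorphic_on S" for m
    unfolding holomorphic_on_def field_differentiable_def
    using gd has_field_derivative_at_within by blast
  have gdd: "deriv (g m) holomorphic_on S" for m
    by (rule holomorphic_deriv[OF ghol Sopen])
  have deriv_eq: "deriv (g m) t = Dp (z0 + t *s b) b $ m" if "t \<in> S" for m t
    using DERIV_imp_deriv[OF gd[OF that]] .
  have a_eq: "(\<chi> m. deriv (g m) 0) = a"
    unfolding vec_eq_iff using deriv_eq[OF S0] a Dp_def by simp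
  define x where "x = \<phi> z0"
  have xD: "x \<in> D" using \<phi>D D(2) x_def by simp
  define T1 where "T1 = {s::real. z0 + s *\<^sub>R b \<in> D}"
  have T1: "open T1" "0 \<in> T1" "\<forall>s\<in>T1. z0 + s *\<^sub>R b \<in> D"
  proof -
    have "T1 = (\<lambda>s. z0 + s *\<^sub>R b) -` D" unfolding T1_def by auto
    moreover have "continuous (at s) (\<lambda>s. z0 + s *\<^sub>R b)" for s :: real
      by (intro continuous_intros)
    ultimately show "open T1" using continuous_open_vimage[OF D(1)] by metis
  qed (use D(2) T1_def in auto)
  have inS1: "of_real s \<in> S" if "s \<in> T1" for s
    using that unfolding T1_def S_def by (simp add: ofreal_smul)
  define c1 where "c1 s = \<phi> (z0 + s *\<^sub>R b)" for s
  define c1' where "c1' s = (\<chi> m. deriv (g m) (of_real s))" for s :: real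
  define c1'' where "c1'' = (\<chi> m. deriv (deriv (g m)) 0)"
  have c1eq: "c1 = (\<lambda>s. \<chi> m. g m (of_real s))"
    unfolding c1_def g_def by (simp add: ofreal_smul)
  have C1: "\<forall>s\<in>T1. (c1 has_vector_derivative c1' s) (at s)"
  proof
    fix s assume s: "s \<in> T1"
    show "(c1 has_vector_derivative c1' s) (at s)"
      unfolding c1eq c1'_def
      by (rule vec_vd, rule has_vector_derivative_real_field,
          rule holomorphic_derivI[OF ghol Sopen inS1[OF s]])
  qed
  have C1': "(c1' has_vector_derivative c1'') (at 0)"
  proof -
    have "((\<lambda>s. deriv (g m) (of_real s)) has_vector_derivative deriv (deriv (g m)) 0) (at 0)" for m
      using has_vector_derivative_real_field[OF holomorphic_derivI[OF gdd Sopen, of "of_real 0"]] S0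
      by simp
    then show ?thesis unfolding c1'_def c1''_def by (rule vec_vd)
  qed
  have E1: "D2 (u \<circ> \<phi>) b b z0 = D1 u c1'' x + D2 u a a x"
    using second_along[OF D Cu Cf \<phi>D T1 C1 C1'] c1_def a_eq c1'_def x_def by simp
  define T2 where "T2 = {s::real. z0 + s *\<^sub>R (\<i> *s b) \<in> D}"
  have T2: "open T2" "0 \<in> T2" "\<forall>s\<in>T2. z0 + s *\<^sub>R (\<i> *s b) \<in> D"
  proof -
    have "T2 = (\<lambda>s. z0 + s *\<^sub>R (\<i> *s b)) -` D" unfolding T2_def by auto
    moreover have "continuous (at s) (\<lambda>s. z0 + s *\<^sub>R (\<i> *s b))" for s :: real
      by (intro continuous_intros)
    ultimately show "open T2" using continuous_open_vimage[OF D(1)] by metis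
  qed (use D(2) T2_def in auto)
  have sm2: "(\<i> * of_real s) *s b = s *\<^sub>R (\<i> *s b)" for s
  proof -
    have "(\<i> * of_real s) *s b = of_real s *s (\<i> *s b)" by (simp add: vector_smult_assoc mult.commute)
    also have "\<dots> = s *\<^sub>R (\<i> *s b)" by (rule ofreal_smul)
    finally show ?thesis .
  qed
  have inS2: "\<i> * of_real s \<in> S" if "s \<in> T2" for s
    using that unfolding T2_def S_def by (simp add: sm2)
  define c2 where "c2 s = \<phi> (z0 + s *\<^sub>R (\<i> *s b))" for s
  define c2' where "c2' s = (\<chi> m. \<i> * deriv (g m) (\<i> * of_real s))" for s :: real
  define c2'' where "c2'' = (\<chi> m. - deriv (deriv (g m)) 0)"
  have c2eq: "c2 = (\<lambda>s. \<chi> m. g m (\<i> * of_real s))"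
    unfolding c2_def g_def by (simp add: sm2)
  have C2: "\<forall>s\<in>T2. (c2 has_vector_derivative c2' s) (at s)"
  proof
    fix s assume s: "s \<in> T2"
    have "((\<lambda>x. g m (\<i> * x)) has_field_derivative \<i> * deriv (g m) (\<i> * of_real s)) (at (of_real s))" for m
    proof -
      have i: "((\<lambda>x. \<i> * x) has_field_derivative \<i>) (at (of_real s))"
        by (auto intro!: derivative_eq_intros)
      show ?thesis
        using DERIV_chain2[OF holomorphic_derivI[OF ghol Sopen inS2[OF s]] i]
        by (simp add: mult.commute)
    qed
    then show "(c2 has_vector_derivative c2' s) (at s)"
      unfolding c2eq c2'_def
      by (intro vec_vd has_vector_derivative_real_field)
  qed
  have C2': "(c2' has_vector_derivative c2'') (at 0)"
  proof -
    have "((\<lambda>x. \<i> * deriv (g m) (\<i> * x)) has_field_derivative - deriv (deriv (g m)) 0) (at (of_real 0))" for m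
    proof -
      have i: "((\<lambda>x. \<i> * x) has_field_derivative \<i>) (at (of_real 0))"
        by (auto intro!: derivative_eq_intros)
      have "((\<lambda>x. deriv (g m) (\<i> * x)) has_field_derivative deriv (deriv (g m)) 0 * \<i>) (at (of_real 0))"
        using DERIV_chain2[OF holomorphic_derivI[OF gdd Sopen, of "\<i> * of_real 0"] i] S0 by simp
      moreover have "\<i> * (deriv (deriv (g m)) 0 * \<i>) = - deriv (deriv (g m)) 0"
      proof -
        have "\<i> * (deriv (deriv (g m)) 0 * \<i>) = \<i> * (\<i> * deriv (deriv (g m)) 0)"
          by (simp only: mult.commute[of _ \<i>])
        also have "\<dots> = - deriv (deriv (g m)) 0" by (rule complex_i_mult_minus)
        finally show ?thesis .
      qed
      ultimately show ?thesis using DERIV_cmult[of _ _ _ _ \<i>] by metis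
    qed
    then show ?thesis unfolding c2'_def c2''_def
      by (intro vec_vd has_vector_derivative_real_field)
  qed
  have a2: "c2' 0 = \<i> *s a"
    unfolding c2'_def using a_eq[symmetric] by (simp add: vec_eq_iff)
  have E2: "D2 (u \<circ> \<phi>) (\<i> *s b) (\<i> *s b) z0 = D1 u c2'' x + D2 u (\<i> *s a) (\<i> *s a) x"
    using second_along[OF D Cu Cf \<phi>D T2 C2 C2'] c2_def a2 x_def by simp
  have "c2'' = - c1''" unfolding c2''_def c1''_def by (simp add: vec_eq_iff)
  then have "D1 u c2'' x = - D1 u c1'' x"
    using linear_neg[OF D1_linear[OF C2_onD(1)[OF Cu xD]]] by simp
  then show ?thesis using E1 E2 x_def by simp
qed

lemma B_lin:
  fixes f :: "complex^'n \<Rightarrow> complex"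
  assumes D: "open D" "p \<in> D" and C: "C2_on D f"
  shows "linear (\<lambda>v. D2 f v w p)" "linear (\<lambda>w. D2 f v w p)"
proof -
  show l1: "linear (\<lambda>v. D2 f v w p)" for w using D2_linear[OF C2_onD(2)[OF C D(2)]] .
  have "(\<lambda>w. D2 f v w p) = (\<lambda>w. D2 f w v p)" by (rule ext) (rule D2_sym[OF D C])
  then show "linear (\<lambda>w. D2 f v w p)" using l1 by simp
qed

lemma axis_i: "\<i> *s axis j (1::complex) = axis j \<i>" "\<i> *s axis j \<i> = - axis j (1::complex)"
  by (simp_all add: vec_eq_iff axis_def)

lemma b1:
  fixes f :: "complex^'n \<Rightarrow> complex"
  assumes D: "open D" "p \<in> D" and C: "C2_on D f" and W: "\<forall>j k. wirtinger2 f j k p = 0"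
  shows "D2 f v w p + D2 f (\<i> *s v) (\<i> *s w) p = 0"
proof -
  define B where "B v w = D2 f v w p" for v w
  define H where "H v w = B v w + B (\<i> *s v) (\<i> *s w)" for v w
  have lJ: "linear (\<lambda>v::complex^'n. \<i> *s v)"
    by (rule linearI) (simp_all add: vector_add_ldistrib vec_eq_iff)
  have l1: "linear (\<lambda>v. B v w)" for w unfolding B_def using B_lin[OF D C] by blast
  have l2: "linear (\<lambda>w. B v w)" for v unfolding B_def using B_lin[OF D C] by blast
  have sym: "B v w = B w v" for v w unfolding B_def using D2_sym[OF D C] by simp
  have H1: "linear (\<lambda>v. H v w)" for w
    unfolding H_def by (intro linear_compose_add l1 linear_compose[OF lJ l1, unfolded o_def])
  have H2: "linear (\<lambda>w. H v w)" for v
    unfolding H_def by (intro linear_compose_add l2 linear_compose[OF lJ l2, unfolded o_def])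
  have negL: "B (- v) w = - B v w" for v w using linear_neg[OF l1] by simp
  have negR: "B v (- w) = - B v w" for v w using linear_neg[OF l2] by simp
  have base: "H e e' = 0" if e: "e \<in> Basis" and e': "e' \<in> Basis" for e e'
  proof -
    obtain j c where ej: "e = axis j c" "c \<in> {1, \<i>}"
      using e by (auto simp: Basis_vec_def Basis_complex_def)
    obtain k d where ek: "e' = axis k d" "d \<in> {1, \<i>}"
      using e' by (auto simp: Basis_vec_def Basis_complex_def)
    define P where "P = B (axis j 1) (axis k 1)"
    define Q where "Q = B (axis j \<i>) (axis k \<i>)"
    define R where "R = B (axis j 1) (axis k \<i>)"
    define T where "T = B (axis j \<i>) (axis k 1)"
    have w1: "P + Q + \<i> * (R - T) = 0"
      using W[rule_format, of j k] unfolding wirtinger2_def P_def Q_def R_def T_def B_def by simp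
    have w2: "P + Q + \<i> * (T - R) = 0"
    proof -
      have s1: "B (axis k 1) (axis j 1) = P" unfolding P_def by (rule sym)
      have s2: "B (axis k \<i>) (axis j \<i>) = Q" unfolding Q_def by (rule sym)
      have s3: "B (axis k 1) (axis j \<i>) = T" unfolding T_def by (rule sym)
      have s4: "B (axis k \<i>) (axis j 1) = R" unfolding R_def by (rule sym)
      have "(P + Q + \<i> * (T - R)) / 4 = 0"
        using W[rule_format, of k j] unfolding wirtinger2_def B_def[symmetric] s1 s2 s3 s4 .
      then show ?thesis by simp
    qed
    have PQ: "P + Q = 0"
    proof -
      have e: "2 * (P + Q) = (P + Q + \<i> * (R - T)) + (P + Q + \<i> * (T - R))" by (simp add: algebra_simps)
      have "2 * (P + Q) = 0" unfolding e w1 w2 by simp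
      then show ?thesis by (subst (asm) mult_eq_0_iff) simp
    qed
    have RT: "R = T"
    proof -
      have e: "(2 * \<i>) * (R - T) = (P + Q + \<i> * (R - T)) - (P + Q + \<i> * (T - R))" by (simp add: algebra_simps)
      have "(2 * \<i>) * (R - T) = 0" unfolding e w1 w2 by simp
      then show ?thesis by (subst (asm) mult_eq_0_iff) simp
    qed
    have c11: "H (axis j 1) (axis k 1) = P + Q" unfolding H_def axis_i P_def Q_def by simp
    have c1i: "H (axis j 1) (axis k \<i>) = R - T" unfolding H_def axis_i R_def T_def negR by simp
    have ci1: "H (axis j \<i>) (axis k 1) = T - R" unfolding H_def axis_i R_def T_def negL by simp
    have cii: "H (axis j \<i>) (axis k \<i>) = Q + P" unfolding H_def axis_i P_def Q_def negL negR by simp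
    have QP: "Q + P = 0" using PQ by (simp only: add.commute[of Q P])
    have cd: "c = 1 \<or> c = \<i>" "d = 1 \<or> d = \<i>" using ej(2) ek(2) by auto
    show ?thesis using cd unfolding ej(1) ek(1)
      by (elim disjE) (simp_all only: c11 c1i ci1 cii PQ QP RT diff_self)
  qed
  have "H v w = (\<Sum>e\<in>Basis. (v \<bullet> e) *\<^sub>R H e w)" using lin_repr[OF H1] .
  also have "\<dots> = (\<Sum>e\<in>Basis. (v \<bullet> e) *\<^sub>R (\<Sum>e'\<in>Basis. (w \<bullet> e') *\<^sub>R H e e'))"
  proof (rule sum.cong[OF refl])
    fix e :: "complex^'n" assume "e \<in> Basis"
    show "(v \<bullet> e) *\<^sub>R H e w = (v \<bullet> e) *\<^sub>R (\<Sum>e'\<in>Basis. (w \<bullet> e') *\<^sub>R H e e')"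
      using lin_repr[OF H2[of e], of w] by (rule arg_cong)
  qed
  also have "\<dots> = 0" using base by (simp add: sum.neutral)
  finally show ?thesis unfolding H_def B_def .
qed

lemma b2:
  fixes f :: "complex^'n \<Rightarrow> complex"
  assumes D: "open D" "p \<in> D" and C: "C2_on D f"
    and Q0: "\<forall>v. D2 f v v p + D2 f (\<i> *s v) (\<i> *s v) p = 0"
  shows "wirtinger2 f j k p = 0"
proof -
  define B where "B v w = D2 f v w p" for v w
  define H where "H v w = B v w + B (\<i> *s v) (\<i> *s w)" for v w
  have lJ: "linear (\<lambda>v::complex^'n. \<i> *s v)"
    by (rule linearI) (simp_all add: vector_add_ldistrib vec_eq_iff)
  have l1: "linear (\<lambda>v. B v w)" for w unfolding B_def using B_lin[OF D C] by blast
  have l2: "linear (\<lambda>w. B v w)" for v unfolding B_def using B_lin[OF D C] by blast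
  have sym: "B v w = B w v" for v w unfolding B_def using D2_sym[OF D C] by simp
  have H1: "linear (\<lambda>v. H v w)" for w
    unfolding H_def by (intro linear_compose_add l1 linear_compose[OF lJ l1, unfolded o_def])
  have H2: "linear (\<lambda>w. H v w)" for v
    unfolding H_def by (intro linear_compose_add l2 linear_compose[OF lJ l2, unfolded o_def])
  have Hsym: "H v w = H w v" for v w
    unfolding H_def using sym[of v w] sym[of "\<i> *s v" "\<i> *s w"] by simp
  have Hd: "H v v = 0" for v using Q0 unfolding H_def B_def by simp
  have H0: "H v w = 0" for v w
  proof -
    have "H (v + w) (v + w) = H v (v + w) + H w (v + w)" by (rule linear_add[OF H1])
    also have "\<dots> = (H v v + H v w) + (H w v + H w w)"
      by (simp only: linear_add[OF H2[of v]] linear_add[OF H2[of w]])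
    finally have "0 = H v w + H w v" unfolding Hd by simp
    then have "0 = 2 * H v w" using Hsym[of w v] by simp
    then show ?thesis by simp
  qed
  have negL: "B (- v) w = - B v w" for v w using linear_neg[OF l1] by simp
  have negR: "B v (- w) = - B v w" for v w using linear_neg[OF l2] by simp
  define P where "P = B (axis j 1) (axis k 1)"
  define Q where "Q = B (axis j \<i>) (axis k \<i>)"
  define R where "R = B (axis j 1) (axis k \<i>)"
  define T where "T = B (axis j \<i>) (axis k 1)"
  have c11: "H (axis j 1) (axis k 1) = P + Q" unfolding H_def axis_i P_def Q_def by simp
  have c1i: "H (axis j 1) (axis k \<i>) = R - T" unfolding H_def axis_i R_def T_def negR by simp
  have "wirtinger2 f j k p = (P + Q + \<i> * (R - T)) / 4"
    unfolding wirtinger2_def P_def Q_def R_def T_def B_def ..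
  also have "\<dots> = 0" using c11 c1i H0 by simp
  finally show ?thesis .
qed

lemma aut_surj:
  assumes D: "open D" "z0 \<in> D" and \<phi>: "\<phi> \<in> Aut D"
  shows "\<exists>b. frechet_derivative \<phi> (at z0) b = a"
proof -
  have bij: "bij_betw \<phi> D D" and H\<phi>: "holo_map_on D \<phi>" and H\<psi>: "holo_map_on D (inv_into D \<phi>)"
    using \<phi> unfolding Aut_def by auto
  define \<psi> where "\<psi> = inv_into D \<phi>"
  define x where "x = \<phi> z0"
  have xD: "x \<in> D" unfolding x_def by (rule bij_betw_apply[OF bij D(2)])
  have inj: "inj_on \<phi> D" by (rule bij_betw_imp_inj_on[OF bij])
  have \<psi>x: "\<psi> x = z0" unfolding \<psi>_def x_def using inv_into_f_f[OF inj D(2)] .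
  have \<phi>\<psi>: "\<phi> (\<psi> y) = y" if "y \<in> D" for y
  proof -
    have "y \<in> \<phi> ` D" using bij_betw_imp_surj_on[OF bij] that by simp
    then show ?thesis unfolding \<psi>_def by (rule f_inv_into_f)
  qed
  define L where "L = frechet_derivative \<phi> (at z0)"
  define M where "M = frechet_derivative \<psi> (at x)"
  have dL: "(\<phi> has_derivative L) (at (\<psi> x))" unfolding L_def \<psi>x by (rule holo_deriv(1)[OF H\<phi> D(2)])
  have dM: "(\<psi> has_derivative M) (at x)" unfolding M_def \<psi>_def by (rule holo_deriv(1)[OF H\<psi> xD])
  have "((\<lambda>y. \<phi> (\<psi> y)) has_derivative (\<lambda>h. L (M h))) (at x)"
    using has_derivative_compose[OF dM dL] by simp
  then have "((\<lambda>y. y) has_derivative (\<lambda>h. L (M h))) (at x)"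
    by (rule has_derivative_transform_within_open[OF _ D(1) xD]) (rule \<phi>\<psi>)
  moreover have "((\<lambda>y. y) has_derivative (\<lambda>h. h)) (at x)" by (rule has_derivative_ident)
  ultimately have "(\<lambda>h. L (M h)) = (\<lambda>h. h)" by (rule has_derivative_unique)
  then have "L (M a) = a" by (rule fun_cong)
  then show ?thesis unfolding L_def by blast
qed


theorem proposition4p1:
  fixes D :: "(complex ^ 'n) set" and A :: "(complex ^ 'n \<Rightarrow> complex) set"
    and z0 :: "complex ^ 'n"
  assumes "transitive_domain D"
    and "\<forall>u\<in>A. C2_on D u"
    and "\<forall>\<phi>\<in>Aut D. \<forall>u\<in>A. u \<circ> \<phi> \<in> A"
    and "z0 \<in> D"
    and "\<forall>u\<in>A. \<forall>j k. wirtinger2 u j k z0 = 0"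
  shows "\<forall>u\<in>A. pluriharmonic_on D u"
proof (intro ballI)
  fix u assume uA: "u \<in> A"
  have Dopen: "open D" using assms(1) unfolding transitive_domain_def domain_def by blast
  show "pluriharmonic_on D u" unfolding pluriharmonic_on_def
  proof (intro ballI allI)
    fix x j k assume xD: "x \<in> D"
    obtain \<phi> where \<phi>: "\<phi> \<in> Aut D" "\<phi> z0 = x"
      using assms(1) assms(4) xD unfolding transitive_domain_def by blast
    have fA: "u \<circ> \<phi> \<in> A" using assms(3) \<phi>(1) uA by blast
    have Cu: "C2_on D u" using assms(2) uA by blast
    have Cf: "C2_on D (u \<circ> \<phi>)" using assms(2) fA by blast
    have bij: "bij_betw \<phi> D D" and H: "holo_map_on D \<phi>"
      using \<phi>(1) unfolding Aut_def by auto
    have \<phi>D: "\<forall>y\<in>D. \<phi> y \<in> D" using bij_betw_apply[OF bij] by blast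
    have W0: "\<forall>j k. wirtinger2 (u \<circ> \<phi>) j k z0 = 0" using assms(5) fA by blast
    have Q: "\<forall>a. D2 u a a x + D2 u (\<i> *s a) (\<i> *s a) x = 0"
    proof
      fix a
      obtain b where b: "frechet_derivative \<phi> (at z0) b = a"
        using aut_surj[OF Dopen assms(4) \<phi>(1)] by blast
      have "D2 (u \<circ> \<phi>) b b z0 + D2 (u \<circ> \<phi>) (\<i> *s b) (\<i> *s b) z0
          = D2 u a a (\<phi> z0) + D2 u (\<i> *s a) (\<i> *s a) (\<phi> z0)"
        by (rule chainQ[OF Dopen assms(4) Cu Cf \<phi>D H b[symmetric]])
      moreover have "D2 (u \<circ> \<phi>) b b z0 + D2 (u \<circ> \<phi>) (\<i> *s b) (\<i> *s b) z0 = 0"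
        by (rule b1[OF Dopen assms(4) Cf W0])
      ultimately show "D2 u a a x + D2 u (\<i> *s a) (\<i> *s a) x = 0" using \<phi>(2) by simp
    qed
    show "wirtinger2 u j k x = 0" by (rule b2[OF Dopen xD Cu Q])
  qed
qed

end
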